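(* Let $\ell,m,n\in\mathbb{N}_0$ with $m+n\ge1$ and $k=\ell+m\ge1$, and fix a word pattern of $N=\ell+m+n$ letters from $\{M,S,T\}$ with exactly $\ell$ letters $M$, $m$ letters $S$, $n$ letters $T$. Then there exist integers $a_j,b_j$ ($j=1,\dots,k$), depending only on the pattern and not on $g$, such that for every $g\in\mathcal{H}(\mathbb{D})$ the corresponding $g$-word $L\in W_g(\ell,m,n)$ satisfies $$L=(1-\delta_L)S_g^kT_g^n+\delta_LS_g^kT_g^n\Pi_0+\sum_{j=1}^ka_jS_g^{k-j}T_g^{n+j}+\sum_{j=1}^kb_jS_g^{k-j}T_g^{n+j}\Pi_0,$$ where $\delta_L=0$ if $L$ ends in $T_gM_g^i$ for some $i\in\mathbb{N}_0$ and $\delta_L=1$ if $L$ ends in $S_gM_g^i$ for some $i\in\mathbb{N}_0$. In particular, there are integers $c_j$ independent of $g$ with $$L=S_g^kT_g^n+\sum_{j=1}^kc_jS_g^{k-j}T_g^{n+j}\quad\text{on }\mathcal{H}_0(\mathbb{D}).$$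
   Context: $\mathcal{H}(\mathbb{D})$ is the space of analytic functions on the unit disc, $\mathcal{H}_0(\mathbb{D})=\{f\in\mathcal{H}(\mathbb{D}):f(0)=0\}$, and $\Pi_0f=f-f(0)$. For $g\in\mathcal{H}(\mathbb{D})$: $M_gf=gf$, $T_gf(z)=\int_0^zf(\zeta)g'(\zeta)d\zeta$, $S_gf(z)=\int_0^zf'(\zeta)g(\zeta)d\zeta$; $S_g^0,T_g^0$ are the identity. $W_g(\ell,m,n)$ is the set of products $L_1\cdots L_N$ with each $L_j\in\{M_g,S_g,T_g\}$ and exactly $\ell$, $m$, $n$ factors equal to $M_g,S_g,T_g$ respectively. "$L$ ends in $T_gM_g^i$" means $L=L'T_gM_g^i$ for some (possibly empty) word $L'$. *)

theory Defs
  imports "HOL-Complex_Analysis.Complex_Analysis"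
begin

text \<open>Functions on the unit disc are modelled as total functions complex \<Rightarrow> complex;
  only their values on the open unit disc (ball 0 1) matter.\<close>

definition Mop :: "(complex \<Rightarrow> complex) \<Rightarrow> (complex \<Rightarrow> complex) \<Rightarrow> (complex \<Rightarrow> complex)" where
  "Mop g f = (\<lambda>z. g z * f z)"

definition Top :: "(complex \<Rightarrow> complex) \<Rightarrow> (complex \<Rightarrow> complex) \<Rightarrow> (complex \<Rightarrow> complex)" where
  "Top g f = (\<lambda>z. contour_integral (linepath 0 z) (\<lambda>w. f w * deriv g w))"

definition Sop :: "(complex \<Rightarrow> complex) \<Rightarrow> (complex \<Rightarrow> complex) \<Rightarrow> (complex \<Rightarrow> complex)" where
  "Sop g f = (\<lambda>z. contour_integral (linepath 0 z) (\<lambda>w. deriv f w * g w))"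

definition Pi0 :: "(complex \<Rightarrow> complex) \<Rightarrow> (complex \<Rightarrow> complex)" where
  "Pi0 f = (\<lambda>z. f z - f 0)"

datatype letter = LM | LS | LT

fun letter_op :: "(complex \<Rightarrow> complex) \<Rightarrow> letter \<Rightarrow> (complex \<Rightarrow> complex) \<Rightarrow> (complex \<Rightarrow> complex)" where
  "letter_op g LM = Mop g"
| "letter_op g LS = Sop g"
| "letter_op g LT = Top g"

fun word_op :: "(complex \<Rightarrow> complex) \<Rightarrow> letter list \<Rightarrow> (complex \<Rightarrow> complex) \<Rightarrow> (complex \<Rightarrow> complex)" where
  "word_op g [] = id"
| "word_op g (x # xs) = letter_op g x \<circ> word_op g xs"

definition count_letter :: "letter \<Rightarrow> letter list \<Rightarrow> nat" where
  "count_letter c w = length (filter (\<lambda>x. x = c) w)"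

definition ends_in_S :: "letter list \<Rightarrow> bool" where
  "ends_in_S w \<longleftrightarrow> (\<exists>w' i. w = w' @ [LS] @ replicate i LM)"

definition ends_in_T :: "letter list \<Rightarrow> bool" where
  "ends_in_T w \<longleftrightarrow> (\<exists>w' i. w = w' @ [LT] @ replicate i LM)"

end

theory Submission
  imports Defs
begin

definition Prim :: "(complex \<Rightarrow> complex) \<Rightarrow> complex \<Rightarrow> complex" where
  "Prim h z = contour_integral (linepath 0 z) h"

lemma seg_sub: "z \<in> ball (0::complex) 1 \<Longrightarrow> closed_segment 0 z \<subseteq> ball 0 1"
  by (simp add: closed_segment_subset convex_ball)

lemma prim_eval:
  assumes "\<forall>w\<in>ball 0 1. (H has_field_derivative h w) (at w)" "z \<in> ball 0 1"
  shows "Prim h z = H z - H 0"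
proof -
  have hc: "(h has_contour_integral (H (pathfinish (linepath 0 z)) - H (pathstart (linepath 0 z)))) (linepath 0 z)"
  proof (rule contour_integral_primitive[where S="ball 0 1"])
    show "valid_path (linepath 0 z)" by simp
    show "path_image (linepath 0 z) \<subseteq> ball 0 1" using seg_sub[OF assms(2)] by simp
    fix x assume "x \<in> ball (0::complex) 1"
    then show "(H has_field_derivative h x) (at x within ball 0 1)"
      using assms(1) has_field_derivative_at_within by blast
  qed
  have "contour_integral (linepath 0 z) h = H z - H 0"
    using contour_integral_unique[OF hc] by simp
  then show ?thesis unfolding Prim_def .
qed

lemma prim_0: "Prim h 0 = 0"
  unfolding Prim_def by (rule contour_integral_trivial)

lemma prim_deriv:
  assumes "h holomorphic_on ball 0 1" "w \<in> ball 0 1"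
  shows "(Prim h has_field_derivative h w) (at w)"
proof -
  obtain H where H: "\<And>x. x \<in> ball 0 1 \<Longrightarrow> (H has_field_derivative h x) (at x within ball 0 1)"
    using holomorphic_convex_primitive'[OF convex_ball open_ball assms(1)] by blast
  have H': "\<forall>x\<in>ball 0 1. (H has_field_derivative h x) (at x)"
  proof
    fix x :: complex assume x: "x \<in> ball 0 1"
    show "(H has_field_derivative h x) (at x)"
      using H[OF x] by (simp only: at_within_open[OF x open_ball])
  qed
  have "((\<lambda>z. H z - H 0) has_field_derivative h w) (at w)"
    using DERIV_diff[OF H'[rule_format, OF assms(2)] DERIV_const[of "H 0"]] by (simp only: diff_zero)
  moreover have "\<And>x. x \<in> ball 0 1 \<Longrightarrow> H x - H 0 = Prim h x"
    using prim_eval[OF H'] by (rule sym)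
  ultimately show ?thesis
    by (rule has_field_derivative_transform_within_open[OF _ open_ball assms(2)])
qed

lemma prim_holo: "h holomorphic_on ball 0 1 \<Longrightarrow> Prim h holomorphic_on ball 0 1"
  using prim_deriv holomorphic_on_open[OF open_ball, of "Prim h"] by blast

lemma Top_Prim: "Top g F = Prim (\<lambda>w. F w * deriv g w)"
  unfolding Top_def Prim_def by (rule ext) simp
lemma Sop_Prim: "Sop g F = Prim (\<lambda>w. deriv F w * g w)"
  unfolding Sop_def Prim_def by (rule ext) simp

lemma Top_char:
  assumes "\<forall>w\<in>ball 0 1. (H has_field_derivative F w * deriv g w) (at w)" "H 0 = 0" "z \<in> ball 0 1"
  shows "Top g F z = H z"
  using prim_eval[OF assms(1,3)] assms(2) by (simp add: Top_Prim)

lemma Sop_char: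
  assumes "\<forall>w\<in>ball 0 1. (H has_field_derivative deriv F w * g w) (at w)" "H 0 = 0" "z \<in> ball 0 1"
  shows "Sop g F z = H z"
  using prim_eval[OF assms(1,3)] assms(2) by (simp add: Sop_Prim)

lemma Top_deriv:
  assumes "g holomorphic_on ball 0 1" "F holomorphic_on ball 0 1" "w \<in> ball 0 1"
  shows "(Top g F has_field_derivative F w * deriv g w) (at w)"
  unfolding Top_Prim
  by (rule prim_deriv[OF holomorphic_on_mult[OF assms(2) holomorphic_deriv[OF assms(1) open_ball]] assms(3)])

lemma Sop_deriv:
  assumes "g holomorphic_on ball 0 1" "F holomorphic_on ball 0 1" "w \<in> ball 0 1"
  shows "(Sop g F has_field_derivative deriv F w * g w) (at w)"
  unfolding Sop_Prim
  by (rule prim_deriv[OF holomorphic_on_mult[OF holomorphic_deriv[OF assms(2) open_ball] assms(1)] assms(3)])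

lemma Top_holo: "g holomorphic_on ball 0 1 \<Longrightarrow> F holomorphic_on ball 0 1 \<Longrightarrow> Top g F holomorphic_on ball 0 1"
  using Top_deriv[of g F] holomorphic_on_open[OF open_ball, of "Top g F"] by blast
lemma Sop_holo: "g holomorphic_on ball 0 1 \<Longrightarrow> F holomorphic_on ball 0 1 \<Longrightarrow> Sop g F holomorphic_on ball 0 1"
  using Sop_deriv[of g F] holomorphic_on_open[OF open_ball, of "Sop g F"] by blast

lemma Top_0: "Top g F 0 = 0" by (simp add: Top_Prim prim_0)
lemma Sop_0: "Sop g F 0 = 0" by (simp add: Sop_Prim prim_0)

lemma Top_cong:
  assumes "\<forall>z\<in>ball 0 1. F z = F' z" "z \<in> ball 0 1"
  shows "Top g F z = Top g F' z"
  unfolding Top_def using seg_sub[OF assms(2)] assms(1)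
  by (intro contour_integral_eq) auto

lemma Sop_cong:
  assumes "\<forall>z\<in>ball 0 1. F z = F' z" "z \<in> ball 0 1"
  shows "Sop g F z = Sop g F' z"
  unfolding Sop_def
proof (intro contour_integral_eq)
  fix x assume "x \<in> path_image (linepath 0 z)"
  then have x: "x \<in> ball 0 1" using seg_sub[OF assms(2)] by auto
  have "eventually (\<lambda>y. y \<in> ball 0 1) (nhds x)"
    using x by (intro eventually_nhds_in_open) auto
  then have "eventually (\<lambda>y. F y = F' y) (nhds x)"
    by eventually_elim (use assms(1) in auto)
  then have "deriv F x = deriv F' x" by (rule deriv_cong_ev) simp
  then show "deriv F x * g x = deriv F' x * g x" by simp
qed

lemma Top_add:
  assumes g: "g holomorphic_on ball 0 1" and A: "A holomorphic_on ball 0 1" and B: "B holomorphic_on ball 0 1"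
    and z: "z \<in> ball 0 1"
  shows "Top g (\<lambda>z. a * A z + b * B z) z = a * Top g A z + b * Top g B z"
proof (rule Top_char[OF _ _ z])
  show "\<forall>w\<in>ball 0 1. ((\<lambda>z. a * Top g A z + b * Top g B z) has_field_derivative (a * A w + b * B w) * deriv g w) (at w)"
  proof
    fix w assume w: "w \<in> ball (0::complex) 1"
    have "((\<lambda>z. a * Top g A z + b * Top g B z) has_field_derivative a * (A w * deriv g w) + b * (B w * deriv g w)) (at w)"
      by (intro DERIV_add DERIV_cmult Top_deriv[OF g A w] Top_deriv[OF g B w])
    then show "((\<lambda>z. a * Top g A z + b * Top g B z) has_field_derivative (a * A w + b * B w) * deriv g w) (at w)"
      by (simp only: distrib_right mult.assoc)
  qed
  show "a * Top g A 0 + b * Top g B 0 = 0" by (simp only: Top_0 mult_zero_right add_0)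
qed

lemma Sop_add:
  assumes g: "g holomorphic_on ball 0 1" and A: "A holomorphic_on ball 0 1" and B: "B holomorphic_on ball 0 1"
    and z: "z \<in> ball 0 1"
  shows "Sop g (\<lambda>z. a * A z + b * B z) z = a * Sop g A z + b * Sop g B z"
proof (rule Sop_char[OF _ _ z])
  show "\<forall>w\<in>ball 0 1. ((\<lambda>z. a * Sop g A z + b * Sop g B z) has_field_derivative deriv (\<lambda>z. a * A z + b * B z) w * g w) (at w)"
  proof
    fix w assume w: "w \<in> ball (0::complex) 1"
    have "((\<lambda>z. a * Sop g A z + b * Sop g B z) has_field_derivative a * (deriv A w * g w) + b * (deriv B w * g w)) (at w)"
      by (intro DERIV_add DERIV_cmult Sop_deriv[OF g A w] Sop_deriv[OF g B w])
    moreover have "((\<lambda>z. a * A z + b * B z) has_field_derivative a * deriv A w + b * deriv B w) (at w)"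
      by (intro DERIV_add DERIV_cmult holomorphic_derivI[OF A open_ball w] holomorphic_derivI[OF B open_ball w])
    then have "deriv (\<lambda>z. a * A z + b * B z) w = a * deriv A w + b * deriv B w"
      by (rule DERIV_imp_deriv)
    ultimately show "((\<lambda>z. a * Sop g A z + b * Sop g B z) has_field_derivative deriv (\<lambda>z. a * A z + b * B z) w * g w) (at w)"
      by (simp only: distrib_right mult.assoc)
  qed
  show "a * Sop g A 0 + b * Sop g B 0 = 0" by (simp only: Sop_0 mult_zero_right add_0)
qed

lemma Top_sum:
  assumes g: "g holomorphic_on ball 0 1" and F: "\<And>i. i \<in> I \<Longrightarrow> F i holomorphic_on ball 0 1"
    and z: "z \<in> ball 0 1"
  shows "Top g (\<lambda>z. \<Sum>i\<in>I. a i * F i z) z = (\<Sum>i\<in>I. a i * Top g (F i) z)"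
proof (rule Top_char[OF _ _ z])
  show "\<forall>w\<in>ball 0 1. ((\<lambda>z. \<Sum>i\<in>I. a i * Top g (F i) z) has_field_derivative (\<Sum>i\<in>I. a i * F i w) * deriv g w) (at w)"
  proof
    fix w assume w: "w \<in> ball (0::complex) 1"
    have "((\<lambda>z. \<Sum>i\<in>I. a i * Top g (F i) z) has_field_derivative (\<Sum>i\<in>I. a i * (F i w * deriv g w))) (at w)"
      by (intro DERIV_sum DERIV_cmult Top_deriv[OF g F w])
    then show "((\<lambda>z. \<Sum>i\<in>I. a i * Top g (F i) z) has_field_derivative (\<Sum>i\<in>I. a i * F i w) * deriv g w) (at w)"
      by (simp only: sum_distrib_right mult.assoc)
  qed
  show "(\<Sum>i\<in>I. a i * Top g (F i) 0) = 0" by (simp only: Top_0 mult_zero_right sum.neutral_const)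
qed

lemma Sop_sum:
  assumes g: "g holomorphic_on ball 0 1" and F: "\<And>i. i \<in> I \<Longrightarrow> F i holomorphic_on ball 0 1"
    and z: "z \<in> ball 0 1"
  shows "Sop g (\<lambda>z. \<Sum>i\<in>I. a i * F i z) z = (\<Sum>i\<in>I. a i * Sop g (F i) z)"
proof (rule Sop_char[OF _ _ z])
  show "\<forall>w\<in>ball 0 1. ((\<lambda>z. \<Sum>i\<in>I. a i * Sop g (F i) z) has_field_derivative deriv (\<lambda>z. \<Sum>i\<in>I. a i * F i z) w * g w) (at w)"
  proof
    fix w assume w: "w \<in> ball (0::complex) 1"
    have "((\<lambda>z. \<Sum>i\<in>I. a i * Sop g (F i) z) has_field_derivative (\<Sum>i\<in>I. a i * (deriv (F i) w * g w))) (at w)"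
      by (intro DERIV_sum DERIV_cmult Sop_deriv[OF g F w])
    moreover have "((\<lambda>z. \<Sum>i\<in>I. a i * F i z) has_field_derivative (\<Sum>i\<in>I. a i * deriv (F i) w)) (at w)"
      by (intro DERIV_sum DERIV_cmult holomorphic_derivI[OF F open_ball w])
    then have "deriv (\<lambda>z. \<Sum>i\<in>I. a i * F i z) w = (\<Sum>i\<in>I. a i * deriv (F i) w)"
      by (rule DERIV_imp_deriv)
    ultimately show "((\<lambda>z. \<Sum>i\<in>I. a i * Sop g (F i) z) has_field_derivative deriv (\<lambda>z. \<Sum>i\<in>I. a i * F i z) w * g w) (at w)"
      by (simp only: sum_distrib_right mult.assoc)
  qed
  show "(\<Sum>i\<in>I. a i * Sop g (F i) 0) = 0" by (simp only: Sop_0 mult_zero_right sum.neutral_const)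
qed

lemma Mop_holo: "g holomorphic_on ball 0 1 \<Longrightarrow> h holomorphic_on ball 0 1 \<Longrightarrow> Mop g h holomorphic_on ball 0 1"
  unfolding Mop_def by (rule holomorphic_on_mult)

lemma MST:
  assumes g: "g holomorphic_on ball 0 1" and Y: "Y holomorphic_on ball 0 1" and Y0: "Y 0 = 0"
    and z: "z \<in> ball 0 1"
  shows "g z * Y z = Sop g Y z + Top g Y z"
proof -
  have "Sop g Y z = g z * Y z - Top g Y z"
  proof (rule Sop_char[OF _ _ z])
    show "\<forall>w\<in>ball 0 1. ((\<lambda>z. g z * Y z - Top g Y z) has_field_derivative deriv Y w * g w) (at w)"
    proof
      fix w assume w: "w \<in> ball (0::complex) 1"
      have "((\<lambda>z. g z * Y z - Top g Y z) has_field_derivative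
          (g w * deriv Y w + deriv g w * Y w) - Y w * deriv g w) (at w)"
        by (intro DERIV_diff DERIV_mult' holomorphic_derivI[OF g open_ball w]
              holomorphic_derivI[OF Y open_ball w] Top_deriv[OF g Y w])
      then show "((\<lambda>z. g z * Y z - Top g Y z) has_field_derivative deriv Y w * g w) (at w)"
        by (simp add: algebra_simps)
    qed
    show "g 0 * Y 0 - Top g Y 0 = 0" by (simp only: Y0 Top_0 mult_zero_right diff_zero)
  qed
  then show ?thesis by simp
qed

lemma TS:
  assumes g: "g holomorphic_on ball 0 1" and Y: "Y holomorphic_on ball 0 1" and Y0: "Y 0 = 0"
    and z: "z \<in> ball 0 1"
  shows "Top g (Sop g Y) z = Sop g (Top g Y) z - Top g (Top g Y) z"
proof (rule Top_char[OF _ _ z])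
  show "\<forall>w\<in>ball 0 1. ((\<lambda>z. Sop g (Top g Y) z - Top g (Top g Y) z) has_field_derivative Sop g Y w * deriv g w) (at w)"
  proof
    fix w assume w: "w \<in> ball (0::complex) 1"
    have TY: "Top g Y holomorphic_on ball 0 1" by (rule Top_holo[OF g Y])
    have d: "deriv (Top g Y) w = Y w * deriv g w"
      by (rule DERIV_imp_deriv[OF Top_deriv[OF g Y w]])
    have "((\<lambda>z. Sop g (Top g Y) z - Top g (Top g Y) z) has_field_derivative
          deriv (Top g Y) w * g w - Top g Y w * deriv g w) (at w)"
      by (intro DERIV_diff Sop_deriv[OF g TY w] Top_deriv[OF g TY w])
    moreover have "deriv (Top g Y) w * g w - Top g Y w * deriv g w = Sop g Y w * deriv g w"
    proof -
      have e: "Sop g Y w = g w * Y w - Top g Y w" using MST[OF g Y Y0 w] by (simp add: eq_diff_eq)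
      show ?thesis unfolding e d by (simp add: algebra_simps)
    qed
    ultimately show "((\<lambda>z. Sop g (Top g Y) z - Top g (Top g Y) z) has_field_derivative Sop g Y w * deriv g w) (at w)"
      by simp
  qed
  show "Sop g (Top g Y) 0 - Top g (Top g Y) 0 = 0" by (simp only: Sop_0 Top_0 diff_zero)
qed

lemma TM:
  assumes g: "g holomorphic_on ball 0 1" and h: "h holomorphic_on ball 0 1"
    and z: "z \<in> ball 0 1"
  shows "Top g (Mop g h) z = Sop g (Top g h) z"
proof -
  have "Sop g (Top g h) z = Top g (Mop g h) z"
  proof (rule Sop_char[OF _ _ z])
    show "\<forall>w\<in>ball 0 1. (Top g (Mop g h) has_field_derivative deriv (Top g h) w * g w) (at w)"
    proof
      fix w assume w: "w \<in> ball (0::complex) 1"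
      have d: "deriv (Top g h) w = h w * deriv g w"
        by (rule DERIV_imp_deriv[OF Top_deriv[OF g h w]])
      show "(Top g (Mop g h) has_field_derivative deriv (Top g h) w * g w) (at w)"
        using Top_deriv[OF g Mop_holo[OF g h] w] d by (simp add: Mop_def algebra_simps)
    qed
    show "Top g (Mop g h) 0 = 0" by (rule Top_0)
  qed
  then show ?thesis by simp
qed

lemma SM:
  assumes g: "g holomorphic_on ball 0 1" and h: "h holomorphic_on ball 0 1"
    and z: "z \<in> ball 0 1"
  shows "Sop g (Mop g h) z = Sop g (Sop g h) z + Sop g (Top g h) z"
proof -
  have Sh: "Sop g h holomorphic_on ball 0 1" by (rule Sop_holo[OF g h])
  have Th: "Top g h holomorphic_on ball 0 1" by (rule Top_holo[OF g h])
  have "Sop g (\<lambda>z. 1 * Sop g h z + 1 * Top g h z) z = Sop g (Mop g h) z"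
  proof (rule Sop_char[OF _ _ z])
    show "\<forall>w\<in>ball 0 1. (Sop g (Mop g h) has_field_derivative deriv (\<lambda>z. 1 * Sop g h z + 1 * Top g h z) w * g w) (at w)"
    proof
      fix w assume w: "w \<in> ball (0::complex) 1"
      have "((\<lambda>z. 1 * Sop g h z + 1 * Top g h z) has_field_derivative 1 * (deriv h w * g w) + 1 * (h w * deriv g w)) (at w)"
        by (intro DERIV_add DERIV_cmult Sop_deriv[OF g h w] Top_deriv[OF g h w])
      then have d1: "deriv (\<lambda>z. 1 * Sop g h z + 1 * Top g h z) w = deriv h w * g w + h w * deriv g w"
        by (simp only: DERIV_imp_deriv mult_1)
      have "(Mop g h has_field_derivative g w * deriv h w + deriv g w * h w) (at w)"
        unfolding Mop_def
        by (intro DERIV_mult' holomorphic_derivI[OF g open_ball w] holomorphic_derivI[OF h open_ball w])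
      then have d2: "deriv (Mop g h) w = g w * deriv h w + deriv g w * h w"
        by (rule DERIV_imp_deriv)
      show "(Sop g (Mop g h) has_field_derivative deriv (\<lambda>z. 1 * Sop g h z + 1 * Top g h z) w * g w) (at w)"
        using Sop_deriv[OF g Mop_holo[OF g h] w] d1 d2 by (simp add: algebra_simps)
    qed
    show "Sop g (Mop g h) 0 = 0" by (rule Sop_0)
  qed
  then show ?thesis using Sop_add[OF g Sh Th z, of 1 1] by simp
qed

lemma S_Pi0:
  assumes h: "h holomorphic_on ball 0 1" and z: "z \<in> ball 0 1"
  shows "Sop g (Pi0 h) z = Sop g h z"
  unfolding Sop_def
proof (intro contour_integral_eq)
  fix x assume "x \<in> path_image (linepath 0 z)"
  then have x: "x \<in> ball 0 1" using seg_sub[OF z] by auto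
  have "(Pi0 h has_field_derivative deriv h x - 0) (at x)"
    unfolding Pi0_def by (intro DERIV_diff holomorphic_derivI[OF h open_ball x] DERIV_const)
  then have "deriv (Pi0 h) x = deriv h x" by (simp only: DERIV_imp_deriv diff_zero)
  then show "deriv (Pi0 h) x * g x = deriv h x * g x" by simp
qed

lemma Pi0_holo: "h holomorphic_on ball 0 1 \<Longrightarrow> Pi0 h holomorphic_on ball 0 1"
  unfolding Pi0_def by (intro holomorphic_on_diff holomorphic_on_const)

lemma Pi0_0: "Pi0 h 0 = 0" unfolding Pi0_def by simp

definition X :: "(complex \<Rightarrow> complex) \<Rightarrow> nat \<Rightarrow> nat \<Rightarrow> (complex \<Rightarrow> complex) \<Rightarrow> complex \<Rightarrow> complex" where
  "X g a b u = (Sop g ^^ a) ((Top g ^^ b) u)"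

lemma X_S: "X g (Suc a) b u = Sop g (X g a b u)"
  by (simp add: X_def)
lemma X_T: "X g 0 (Suc b) u = Top g (X g 0 b u)"
  by (simp add: X_def)
lemma X_00: "X g 0 0 u = u"
  by (simp add: X_def)

lemma X_holo:
  assumes g: "g holomorphic_on ball 0 1" and u: "u holomorphic_on ball 0 1"
  shows "X g a b u holomorphic_on ball 0 1"
proof -
  have "X g 0 b u holomorphic_on ball 0 1"
    by (induction b) (use u Top_holo[OF g] in \<open>simp_all only: X_T X_00\<close>)
  then show ?thesis
    by (induction a) (use Sop_holo[OF g] in \<open>simp_all only: X_S\<close>)
qed

lemma X_at0:
  assumes "1 \<le> a + b \<or> u 0 = 0"
  shows "X g a b u 0 = 0"
proof (cases a)
  case (Suc a') then show ?thesis by (simp only: X_S Sop_0)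
next
  case 0
  show ?thesis
  proof (cases b)
    case (Suc b') then show ?thesis using 0 by (simp only: X_T Top_0)
  next
    case b0: 0 then show ?thesis using 0 assms by (simp add: X_00)
  qed
qed

definition comb :: "(complex \<Rightarrow> complex) \<Rightarrow> nat \<Rightarrow> (nat \<Rightarrow> int) \<Rightarrow> (complex \<Rightarrow> complex) \<Rightarrow> complex \<Rightarrow> complex" where
  "comb g N c u = (\<lambda>z. \<Sum>b\<le>N. of_int (c b) * X g (N - b) b u z)"

lemma comb_holo:
  assumes g: "g holomorphic_on ball 0 1" and u: "u holomorphic_on ball 0 1"
  shows "comb g N c u holomorphic_on ball 0 1"
  unfolding comb_def
  by (intro holomorphic_on_sum holomorphic_on_mult holomorphic_on_const X_holo[OF g u])

lemma comb_at0:
  assumes "1 \<le> N \<or> u 0 = 0"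
  shows "comb g N c u 0 = 0"
proof -
  have "\<And>b. b \<in> {..N} \<Longrightarrow> X g (N - b) b u 0 = 0"
    using assms by (intro X_at0) auto
  then show ?thesis unfolding comb_def by simp
qed

lemma comb_add: "comb g N (\<lambda>x. c x + d x) u z = comb g N c u z + comb g N d u z"
  unfolding comb_def by (simp add: distrib_right sum.distrib)

lemma comb_diff: "comb g N (\<lambda>x. c x - d x) u z = comb g N c u z - comb g N d u z"
  unfolding comb_def by (simp add: left_diff_distrib sum_subtractf)

lemma comb_sum: "comb g N (\<lambda>x. \<Sum>i\<in>I. a i * e i x) u z = (\<Sum>i\<in>I. of_int (a i) * comb g N (e i) u z)"
  unfolding comb_def by (simp add: sum_distrib_left sum_distrib_right mult.assoc sum.swap[of _ I])

lemma comb_single: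
  assumes "k \<le> N"
  shows "comb g N (\<lambda>x. if x = k then 1 else 0) u z = X g (N - k) k u z"
proof -
  have "comb g N (\<lambda>x. if x = k then 1 else 0) u z = (\<Sum>b\<le>N. if b = k then X g (N - b) b u z else 0)"
    unfolding comb_def by (intro sum.cong) auto
  also have "\<dots> = X g (N - k) k u z" using assms by (simp add: sum.delta)
  finally show ?thesis .
qed

lemma S_comb:
  assumes g: "g holomorphic_on ball 0 1" and u: "u holomorphic_on ball 0 1" and z: "z \<in> ball 0 1"
    and cN: "c (Suc N) = 0"
  shows "Sop g (comb g N c u) z = comb g (Suc N) c u z"
proof -
  have "Sop g (comb g N c u) z = (\<Sum>b\<le>N. of_int (c b) * Sop g (X g (N - b) b u) z)"
    unfolding comb_def
    by (rule Sop_sum[OF g _ z, of "{..N}" "\<lambda>b. X g (N - b) b u" "\<lambda>b. of_int (c b)"])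
       (rule X_holo[OF g u])
  also have "\<dots> = (\<Sum>b\<le>N. of_int (c b) * X g (Suc N - b) b u z)"
    by (intro sum.cong refl) (simp add: X_S Suc_diff_le)
  also have "\<dots> = comb g (Suc N) c u z"
    unfolding comb_def using cN by simp
  finally show ?thesis .
qed

lemma T_comb_expand:
  assumes g: "g holomorphic_on ball 0 1" and u: "u holomorphic_on ball 0 1" and z: "z \<in> ball 0 1"
  shows "Top g (comb g N c u) z = (\<Sum>b\<le>N. of_int (c b) * Top g (X g (N - b) b u) z)"
  unfolding comb_def
  by (rule Top_sum[OF g _ z, of "{..N}" "\<lambda>b. X g (N - b) b u" "\<lambda>b. of_int (c b)"])
     (rule X_holo[OF g u])

definition KT :: "nat \<Rightarrow> nat \<Rightarrow> (nat \<Rightarrow> int) \<Rightarrow> bool" where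
  "KT a b e \<longleftrightarrow> e (Suc b) = 1 \<and> (\<forall>x<Suc b. e x = 0) \<and> (\<forall>x>a+b+1. e x = 0) \<and>
     (\<forall>g u. g holomorphic_on ball 0 1 \<longrightarrow> u holomorphic_on ball 0 1 \<longrightarrow> (b = 0 \<longrightarrow> u 0 = 0) \<longrightarrow>
        (\<forall>z\<in>ball 0 1. Top g (X g a b u) z = comb g (a+b+1) e u z))"

lemma TComb:
  assumes KTs: "\<forall>b'. B \<le> b' \<and> b' \<le> N \<longrightarrow> (\<exists>e. KT (N - b') b' e)"
    and cz: "\<forall>x<B. c x = 0" and cN: "\<forall>x>N. c x = 0"
  shows "\<exists>c'. c' (Suc B) = c B \<and> (\<forall>x<Suc B. c' x = 0) \<and> (\<forall>x>N+1. c' x = 0) \<and>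
     (\<forall>g u. g holomorphic_on ball 0 1 \<longrightarrow> u holomorphic_on ball 0 1 \<longrightarrow> (B = 0 \<longrightarrow> u 0 = 0) \<longrightarrow>
        (\<forall>z\<in>ball 0 1. Top g (comb g N c u) z = comb g (N+1) c' u z))"
proof -
  from KTs obtain E where E: "\<And>b'. B \<le> b' \<Longrightarrow> b' \<le> N \<Longrightarrow> KT (N - b') b' (E b')"
    by metis
  define c' where "c' x = (\<Sum>b\<in>{B..N}. c b * E b x)" for x
  have c'1: "c' (Suc B) = c B"
  proof (cases "B \<le> N")
    case True
    have "c' (Suc B) = (\<Sum>b\<in>{B..N}. if b = B then c b else 0)"
      unfolding c'_def
    proof (intro sum.cong refl)
      fix b assume b: "b \<in> {B..N}"
      have K: "KT (N - b) b (E b)" using E b by auto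
      show "c b * E b (Suc B) = (if b = B then c b else 0)"
        using K b unfolding KT_def by (cases "b = B") auto
    qed
    also have "\<dots> = c B" using True by (simp add: sum.delta)
    finally show ?thesis .
  next
    case False
    then show ?thesis using cN unfolding c'_def by simp
  qed
  have c'2: "\<forall>x<Suc B. c' x = 0"
  proof (intro allI impI)
    fix x assume x: "x < Suc B"
    have "\<And>b. b \<in> {B..N} \<Longrightarrow> E b x = 0"
    proof -
      fix b assume b: "b \<in> {B..N}"
      have K: "KT (N - b) b (E b)" using E b by auto
      then show "E b x = 0" using x b unfolding KT_def by auto
    qed
    then show "c' x = 0" unfolding c'_def by simp
  qed
  have c'3: "\<forall>x>N+1. c' x = 0"
  proof (intro allI impI)
    fix x assume x: "x > N + 1"
    have "\<And>b. b \<in> {B..N} \<Longrightarrow> E b x = 0"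
    proof -
      fix b assume b: "b \<in> {B..N}"
      have K: "KT (N - b) b (E b)" using E b by auto
      then show "E b x = 0" using x b unfolding KT_def by auto
    qed
    then show "c' x = 0" unfolding c'_def by simp
  qed
  have c'4: "\<forall>z\<in>ball 0 1. Top g (comb g N c u) z = comb g (N+1) c' u z"
    if g: "g holomorphic_on ball 0 1" and u: "u holomorphic_on ball 0 1" and u0: "B = 0 \<longrightarrow> u 0 = 0" for g u
  proof
    fix z :: complex assume z: "z \<in> ball 0 1"
    have "Top g (comb g N c u) z = (\<Sum>b\<le>N. of_int (c b) * Top g (X g (N - b) b u) z)"
      by (rule T_comb_expand[OF g u z])
    also have "\<dots> = (\<Sum>b\<in>{B..N}. of_int (c b) * comb g (N+1) (E b) u z)"
    proof (rule sum.mono_neutral_cong_right)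
      show "finite {..N}" by simp
      show "{B..N} \<subseteq> {..N}" by auto
      show "\<forall>i\<in>{..N} - {B..N}. of_int (c i) * Top g (X g (N - i) i u) z = 0"
        using cz by auto
      show "of_int (c x) * Top g (X g (N - x) x u) z = of_int (c x) * comb g (N + 1) (E x) u z"
        if x: "x \<in> {B..N}" for x
      proof -
        have K: "KT (N - x) x (E x)" using E x by auto
        have "Top g (X g (N - x) x u) z = comb g (N - x + x + 1) (E x) u z"
          using K g u u0 x z unfolding KT_def by auto
        then show ?thesis using x by simp
      qed
    qed
    also have "\<dots> = comb g (N+1) c' u z"
      unfolding c'_def by (rule comb_sum[symmetric])
    finally show "Top g (comb g N c u) z = comb g (N+1) c' u z" .
  qed
  show ?thesis
    by (rule exI[of _ c']) (use c'1 c'2 c'3 c'4 in blast)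
qed

lemma KT_exists: "\<exists>e. KT a b e"
proof (induction a arbitrary: b rule: less_induct)
  case (less a)
  show ?case
  proof (cases a)
    case 0
    define e where "e x = (if x = Suc b then 1 else (0::int))" for x
    have "KT a b e"
      unfolding KT_def
    proof (intro conjI allI impI)
      show "e (Suc b) = 1" by (simp add: e_def)
      show "e x = 0" if "x < Suc b" for x using that by (simp add: e_def)
      show "e x = 0" if "x > a + b + 1" for x using that 0 by (simp add: e_def)
      fix g u assume g: "g holomorphic_on ball 0 1" and u: "u holomorphic_on ball 0 1"
      show "\<forall>z\<in>ball 0 1. Top g (X g a b u) z = comb g (a + b + 1) e u z"
      proof
        fix z :: complex assume z: "z \<in> ball 0 1"
        have "comb g (a + b + 1) e u z = X g 0 (Suc b) u z"
          using comb_single[of "Suc b" "a + b + 1" g u z] 0 unfolding e_def by simp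
        then show "Top g (X g a b u) z = comb g (a + b + 1) e u z"
          using 0 by (simp only: X_T)
      qed
    qed
    then show ?thesis by blast
  next
    case (Suc a')
    obtain e0 where e0: "KT a' b e0" using less Suc by blast
    define N where "N = a' + b + 1"
    have KTs: "\<forall>b'. Suc b \<le> b' \<and> b' \<le> N \<longrightarrow> (\<exists>e. KT (N - b') b' e)"
      using less Suc unfolding N_def by (intro allI impI) (rule less, auto)
    have cz: "\<forall>x<Suc b. e0 x = 0" and cN: "\<forall>x>N. e0 x = 0" and e01: "e0 (Suc b) = 1"
      using e0 unfolding KT_def N_def by auto
    obtain c'' where c''1: "\<forall>x<Suc (Suc b). c'' x = 0" and c''2: "\<forall>x>N+1. c'' x = 0"
      and c''3: "\<forall>g u. g holomorphic_on ball 0 1 \<longrightarrow> u holomorphic_on ball 0 1 \<longrightarrow> (Suc b = 0 \<longrightarrow> u 0 = 0) \<longrightarrow>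
        (\<forall>z\<in>ball 0 1. Top g (comb g N e0 u) z = comb g (N+1) c'' u z)"
      using TComb[OF KTs cz cN] by blast
    define e where "e x = e0 x - c'' x" for x
    have "KT a b e"
      unfolding KT_def
    proof (intro conjI allI impI)
      show "e (Suc b) = 1" using e01 c''1 by (simp add: e_def)
      show "e x = 0" if "x < Suc b" for x using that cz c''1 by (simp add: e_def)
      show "e x = 0" if "x > a + b + 1" for x using that cN c''2 Suc by (simp add: e_def N_def)
      fix g u assume g: "g holomorphic_on ball 0 1" and u: "u holomorphic_on ball 0 1"
        and u0: "b = 0 \<longrightarrow> u 0 = 0"
      show "\<forall>z\<in>ball 0 1. Top g (X g a b u) z = comb g (a + b + 1) e u z"
      proof
        fix z :: complex assume z: "z \<in> ball 0 1"
        define Y where "Y = X g a' b u"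
        have Yh: "Y holomorphic_on ball 0 1" unfolding Y_def by (rule X_holo[OF g u])
        have Y0: "Y 0 = 0" unfolding Y_def using u0 by (intro X_at0) (cases b, auto)
        have TY: "\<forall>w\<in>ball 0 1. Top g Y w = comb g N e0 u w"
          using e0 g u u0 unfolding KT_def Y_def N_def by auto
        have "Top g (X g a b u) z = Top g (Sop g Y) z"
          using Suc by (simp only: Y_def X_S)
        also have "\<dots> = Sop g (Top g Y) z - Top g (Top g Y) z"
          by (rule TS[OF g Yh Y0 z])
        also have "Sop g (Top g Y) z = Sop g (comb g N e0 u) z"
          by (rule Sop_cong[OF TY z])
        also have "\<dots> = comb g (Suc N) e0 u z"
          by (rule S_comb[OF g u z]) (use cN in simp)
        also have "Top g (Top g Y) z = Top g (comb g N e0 u) z"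
          by (rule Top_cong[OF TY z])
        also have "\<dots> = comb g (N+1) c'' u z"
          using c''3 g u z by blast
        also have "comb g (Suc N) e0 u z - comb g (N + 1) c'' u z = comb g (N+1) e u z"
          unfolding e_def by (simp add: comb_diff)
        also have "N + 1 = a + b + 1" using Suc N_def by simp
        finally show "Top g (X g a b u) z = comb g (a + b + 1) e u z" .
      qed
    qed
    then show ?thesis by blast
  qed
qed

lemma TComb_full:
  assumes cz: "\<forall>x<B. c x = 0" and cN: "\<forall>x>N. c x = 0"
  shows "\<exists>c'. c' (Suc B) = c B \<and> (\<forall>x<Suc B. c' x = 0) \<and> (\<forall>x>N+1. c' x = 0) \<and>
     (\<forall>g u. g holomorphic_on ball 0 1 \<longrightarrow> u holomorphic_on ball 0 1 \<longrightarrow> (B = 0 \<longrightarrow> u 0 = 0) \<longrightarrow>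
        (\<forall>z\<in>ball 0 1. Top g (comb g N c u) z = comb g (N+1) c' u z))"
  by (rule TComb[OF _ cz cN]) (use KT_exists in blast)

lemma comb_single':
  assumes "k \<le> N"
  shows "comb g N (\<lambda>x. if x = k then a else 0) u z = of_int a * X g (N - k) k u z"
proof -
  have "comb g N (\<lambda>x. if x = k then a else 0) u z = (\<Sum>b\<le>N. if b = k then of_int a * X g (N - b) b u z else 0)"
    unfolding comb_def by (intro sum.cong) auto
  also have "\<dots> = of_int a * X g (N - k) k u z" using assms by (simp add: sum.delta)
  finally show ?thesis .
qed

lemma comb_zero: "comb g N (\<lambda>x. 0) u z = 0"
  unfolding comb_def by simp

definition comb2 where
  "comb2 g N c d f = (\<lambda>z. comb g N c f z + comb g N d (Pi0 f) z)"

lemma comb2_holo: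
  assumes g: "g holomorphic_on ball 0 1" and f: "f holomorphic_on ball 0 1"
  shows "comb2 g N c d f holomorphic_on ball 0 1"
  unfolding comb2_def
  by (intro holomorphic_on_add comb_holo[OF g f] comb_holo[OF g Pi0_holo[OF f]])

lemma comb2_eq: "comb2 g N c d f = (\<lambda>z. 1 * comb g N c f z + 1 * comb g N d (Pi0 f) z)"
  unfolding comb2_def by simp

lemma S2:
  assumes g: "g holomorphic_on ball 0 1" and f: "f holomorphic_on ball 0 1" and z: "z \<in> ball 0 1"
    and c: "c (Suc N) = 0" and d: "d (Suc N) = 0"
  shows "Sop g (comb2 g N c d f) z = comb2 g (Suc N) c d f z"
  unfolding comb2_eq
  using Sop_add[OF g comb_holo[OF g f, of N c] comb_holo[OF g Pi0_holo[OF f], of N d] z, of 1 1]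
    S_comb[where c=c and N=N, OF g f z c] S_comb[where c=d and N=N, OF g Pi0_holo[OF f] z d]
  by simp

lemma T2:
  assumes cz: "\<forall>x<B. c x = 0 \<and> d x = 0" and c0: "c 0 = 0" and cN: "\<forall>x>N. c x = 0 \<and> d x = 0"
  shows "\<exists>c' d'. c' (Suc B) = c B \<and> d' (Suc B) = d B \<and> (\<forall>x<Suc B. c' x = 0 \<and> d' x = 0) \<and>
     c' 0 = 0 \<and> (\<forall>x>Suc N. c' x = 0 \<and> d' x = 0) \<and>
     (\<forall>g f. g holomorphic_on ball 0 1 \<longrightarrow> f holomorphic_on ball 0 1 \<longrightarrow>
        (\<forall>z\<in>ball 0 1. Top g (comb2 g N c d f) z = comb2 g (Suc N) c' d' f z))"
proof -
  define B1 where "B1 = max B 1"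
  have cz1: "\<forall>x<B1. c x = 0"
  proof (intro allI impI)
    fix x assume x: "x < B1"
    show "c x = 0"
    proof (cases "x = 0")
      case True with c0 show ?thesis by simp
    next
      case False with x have "x < B" unfolding B1_def by simp
      then show ?thesis using cz by blast
    qed
  qed
  have cNc: "\<forall>x>N. c x = 0" and cNd: "\<forall>x>N. d x = 0" and czd: "\<forall>x<B. d x = 0"
    using cN cz by auto
  obtain c' where c'1: "c' (Suc B1) = c B1" and c'2: "\<forall>x<Suc B1. c' x = 0" and c'3: "\<forall>x>N+1. c' x = 0"
    and c'4: "\<forall>g u. g holomorphic_on ball 0 1 \<longrightarrow> u holomorphic_on ball 0 1 \<longrightarrow> (B1 = 0 \<longrightarrow> u 0 = 0) \<longrightarrow>
        (\<forall>z\<in>ball 0 1. Top g (comb g N c u) z = comb g (N+1) c' u z)"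
    using TComb_full[OF cz1 cNc] by blast
  obtain d' where d'1: "d' (Suc B) = d B" and d'2: "\<forall>x<Suc B. d' x = 0" and d'3: "\<forall>x>N+1. d' x = 0"
    and d'4: "\<forall>g u. g holomorphic_on ball 0 1 \<longrightarrow> u holomorphic_on ball 0 1 \<longrightarrow> (B = 0 \<longrightarrow> u 0 = 0) \<longrightarrow>
        (\<forall>z\<in>ball 0 1. Top g (comb g N d u) z = comb g (N+1) d' u z)"
    using TComb_full[OF czd cNd] by blast
  have e1: "c' (Suc B) = c B"
  proof (cases "B = 0")
    case True then show ?thesis using c'2 c0 unfolding B1_def by simp
  next
    case False then have "B1 = B" unfolding B1_def by simp
    then show ?thesis using c'1 by simp
  qed
  have e2: "\<forall>x<Suc B. c' x = 0 \<and> d' x = 0" using c'2 d'2 unfolding B1_def by auto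
  have e3: "c' 0 = 0" using c'2 by simp
  have e4: "\<forall>x>Suc N. c' x = 0 \<and> d' x = 0" using c'3 d'3 by simp
  have e5: "Top g (comb2 g N c d f) z = comb2 g (Suc N) c' d' f z"
    if g: "g holomorphic_on ball 0 1" and f: "f holomorphic_on ball 0 1" and z: "z \<in> ball 0 1" for g f z
  proof -
    have B1: "B1 \<noteq> 0" unfolding B1_def by simp
    have "Top g (comb2 g N c d f) z = 1 * Top g (comb g N c f) z + 1 * Top g (comb g N d (Pi0 f)) z"
      unfolding comb2_eq
      by (rule Top_add[OF g comb_holo[OF g f] comb_holo[OF g Pi0_holo[OF f]] z])
    also have "\<dots> = comb2 g (Suc N) c' d' f z"
      using c'4 d'4 g f z B1 Pi0_holo[OF f] Pi0_0[of f] unfolding comb2_def by simp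
    finally show ?thesis .
  qed
  show ?thesis
    by (rule exI[of _ c'], rule exI[of _ d']) (use d'1 e1 e2 e3 e4 e5 in blast)
qed

definition Rep :: "nat \<Rightarrow> nat \<Rightarrow> (nat \<Rightarrow> int) \<Rightarrow> (nat \<Rightarrow> int) \<Rightarrow>
   ((complex \<Rightarrow> complex) \<Rightarrow> (complex \<Rightarrow> complex) \<Rightarrow> complex \<Rightarrow> complex) \<Rightarrow> bool" where
  "Rep N B c d F \<longleftrightarrow> (\<forall>x<B. c x = 0 \<and> d x = 0) \<and> c 0 = 0 \<and> (\<forall>x>N. c x = 0 \<and> d x = 0) \<and>
     (\<forall>g f. g holomorphic_on ball 0 1 \<longrightarrow> f holomorphic_on ball 0 1 \<longrightarrow>
        (\<forall>z\<in>ball 0 1. F g f z = comb2 g N c d f z))"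

lemma Step_S:
  assumes "Rep N B c d F"
  shows "Rep (Suc N) B c d (\<lambda>g f. Sop g (F g f))"
proof -
  have *: "Sop g (F g f) z = comb2 g (Suc N) c d f z"
    if g: "g holomorphic_on ball 0 1" and f: "f holomorphic_on ball 0 1" and z: "z \<in> ball (0::complex) 1" for g f z
  proof -
    have F: "\<forall>z\<in>ball 0 1. F g f z = comb2 g N c d f z" using assms g f unfolding Rep_def by auto
    have cd: "c (Suc N) = 0" "d (Suc N) = 0" using assms unfolding Rep_def by auto
    show ?thesis
      using Sop_cong[OF F z] S2[where c=c and d=d and N=N, OF g f z cd] by simp
  qed
  show ?thesis using assms * unfolding Rep_def by auto
qed

lemma Step_T:
  assumes "Rep N B c d F"
  shows "\<exists>c' d'. c' (Suc B) = c B \<and> d' (Suc B) = d B \<and> Rep (Suc N) (Suc B) c' d' (\<lambda>g f. Top g (F g f))"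
proof -
  have cz: "\<forall>x<B. c x = 0 \<and> d x = 0" and c0: "c 0 = 0" and cN: "\<forall>x>N. c x = 0 \<and> d x = 0"
    and F: "\<forall>g f. g holomorphic_on ball 0 1 \<longrightarrow> f holomorphic_on ball 0 1 \<longrightarrow>
        (\<forall>z\<in>ball 0 1. F g f z = comb2 g N c d f z)"
    using assms unfolding Rep_def by auto
  obtain c' d' where 1: "c' (Suc B) = c B" "d' (Suc B) = d B" and 2: "\<forall>x<Suc B. c' x = 0 \<and> d' x = 0"
    and 3: "c' 0 = 0" and 4: "\<forall>x>Suc N. c' x = 0 \<and> d' x = 0"
    and 5: "\<forall>g f. g holomorphic_on ball 0 1 \<longrightarrow> f holomorphic_on ball 0 1 \<longrightarrow>
        (\<forall>z\<in>ball 0 1. Top g (comb2 g N c d f) z = comb2 g (Suc N) c' d' f z)"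
    using T2[OF cz c0 cN] by blast
  have "Rep (Suc N) (Suc B) c' d' (\<lambda>g f. Top g (F g f))"
    unfolding Rep_def
  proof (intro conjI allI impI ballI)
    fix g f z assume g: "g holomorphic_on ball 0 1" and f: "f holomorphic_on ball 0 1" and z: "z \<in> ball (0::complex) 1"
    show "Top g (F g f) z = comb2 g (Suc N) c' d' f z"
      using Top_cong[of "F g f" "comb2 g N c d f" z g] F g f z 5 by auto
  qed (use 2 3 4 in auto)
  then show ?thesis using 1 by blast
qed

lemma Step_M:
  assumes "Rep N B c d F" and N: "1 \<le> N"
  shows "\<exists>c' d'. c' B = c B \<and> d' B = d B \<and> Rep (Suc N) B c' d' (\<lambda>g f. Mop g (F g f))"
proof -
  have cz: "\<forall>x<B. c x = 0 \<and> d x = 0" and c0: "c 0 = 0" and cN: "\<forall>x>N. c x = 0 \<and> d x = 0"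
    and F: "\<forall>g f. g holomorphic_on ball 0 1 \<longrightarrow> f holomorphic_on ball 0 1 \<longrightarrow>
        (\<forall>z\<in>ball 0 1. F g f z = comb2 g N c d f z)"
    using assms unfolding Rep_def by auto
  obtain c' d' where 2: "\<forall>x<Suc B. c' x = 0 \<and> d' x = 0"
    and 3: "c' 0 = 0" and 4: "\<forall>x>Suc N. c' x = 0 \<and> d' x = 0"
    and 5: "\<forall>g f. g holomorphic_on ball 0 1 \<longrightarrow> f holomorphic_on ball 0 1 \<longrightarrow>
        (\<forall>z\<in>ball 0 1. Top g (comb2 g N c d f) z = comb2 g (Suc N) c' d' f z)"
    using T2[OF cz c0 cN] by blast
  define c2 where "c2 x = c x + c' x" for x
  define d2 where "d2 x = d x + d' x" for x
  have "Rep (Suc N) B c2 d2 (\<lambda>g f. Mop g (F g f))"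
    unfolding Rep_def
  proof (intro conjI allI impI ballI)
    fix g f z assume g: "g holomorphic_on ball 0 1" and f: "f holomorphic_on ball 0 1" and z: "z \<in> ball (0::complex) 1"
    have G: "comb2 g N c d f holomorphic_on ball 0 1" by (rule comb2_holo[OF g f])
    have G0: "comb2 g N c d f 0 = 0" unfolding comb2_def using N by (simp add: comb_at0)
    have cd: "c (Suc N) = 0" "d (Suc N) = 0" using cN by auto
    have "Mop g (F g f) z = g z * comb2 g N c d f z" using F g f z unfolding Mop_def by auto
    also have "\<dots> = Sop g (comb2 g N c d f) z + Top g (comb2 g N c d f) z"
      by (rule MST[OF g G G0 z])
    also have "\<dots> = comb2 g (Suc N) c d f z + comb2 g (Suc N) c' d' f z"
      using S2[where c=c and d=d and N=N, OF g f z cd] 5 g f z by simp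
    also have "\<dots> = comb2 g (Suc N) c2 d2 f z"
      unfolding comb2_def c2_def d2_def by (simp add: comb_add)
    finally show "Mop g (F g f) z = comb2 g (Suc N) c2 d2 f z" .
  next
    fix x assume "x < B" then show "c2 x = 0" using cz 2 by (simp add: c2_def)
  next
    fix x assume "x < B" then show "d2 x = 0" using cz 2 by (simp add: d2_def)
  next
    show "c2 0 = 0" using c0 3 by (simp add: c2_def)
  next
    fix x assume "Suc N < x" then show "c2 x = 0" using cN 4 by (simp add: c2_def)
  next
    fix x assume "Suc N < x" then show "d2 x = 0" using cN 4 by (simp add: d2_def)
  qed
  moreover have "c2 B = c B" "d2 B = d B" using 2 by (auto simp: c2_def d2_def)
  ultimately show ?thesis by blast
qed

lemma Rep_cong: "Rep N B c d F \<Longrightarrow> (\<And>g f. G g f = F g f) \<Longrightarrow> Rep N B c d G"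
  unfolding Rep_def by simp

lemma count_Cons: "count_letter a (x # w) = (if x = a then Suc (count_letter a w) else count_letter a w)"
  unfolding count_letter_def by simp

lemma word_rep:
  assumes "Rep N B c d F" and N: "1 \<le> N"
  shows "\<exists>c' d'. c' (B + count_letter LT w) = c B \<and> d' (B + count_letter LT w) = d B \<and>
           Rep (N + length w) (B + count_letter LT w) c' d' (\<lambda>g f. word_op g w (F g f))"
proof (induction w)
  case Nil
  have "count_letter LT [] = 0" unfolding count_letter_def by simp
  moreover have "Rep N B c d (\<lambda>g f. word_op g [] (F g f))"
    by (rule Rep_cong[OF assms(1)]) simp
  ultimately show ?case by auto
next
  case (Cons x w)
  obtain c1 d1 where c1: "c1 (B + count_letter LT w) = c B" "d1 (B + count_letter LT w) = d B"
    and R: "Rep (N + length w) (B + count_letter LT w) c1 d1 (\<lambda>g f. word_op g w (F g f))"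
    using Cons by blast
  have N': "1 \<le> N + length w" using N by simp
  show ?case
  proof (cases x)
    case LM
    obtain c2 d2 where "c2 (B + count_letter LT w) = c1 (B + count_letter LT w)"
      "d2 (B + count_letter LT w) = d1 (B + count_letter LT w)"
      and R2: "Rep (Suc (N + length w)) (B + count_letter LT w) c2 d2 (\<lambda>g f. Mop g (word_op g w (F g f)))"
      using Step_M[OF R N'] by blast
    moreover have "Rep (N + length (x # w)) (B + count_letter LT (x # w)) c2 d2 (\<lambda>g f. word_op g (x # w) (F g f))"
      using R2 LM by (simp add: count_Cons)
    ultimately show ?thesis using c1 LM by (auto simp: count_Cons)
  next
    case LS
    have R2: "Rep (Suc (N + length w)) (B + count_letter LT w) c1 d1 (\<lambda>g f. Sop g (word_op g w (F g f)))"
      using Step_S[OF R] by blast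
    have "Rep (N + length (x # w)) (B + count_letter LT (x # w)) c1 d1 (\<lambda>g f. word_op g (x # w) (F g f))"
      using R2 LS by (simp add: count_Cons)
    then show ?thesis using c1 LS by (auto simp: count_Cons)
  next
    case LT
    obtain c2 d2 where "c2 (Suc (B + count_letter LT w)) = c1 (B + count_letter LT w)"
      "d2 (Suc (B + count_letter LT w)) = d1 (B + count_letter LT w)"
      and R2: "Rep (Suc (N + length w)) (Suc (B + count_letter LT w)) c2 d2 (\<lambda>g f. Top g (word_op g w (F g f)))"
      using Step_T[OF R] by blast
    moreover have "Rep (N + length (x # w)) (B + count_letter LT (x # w)) c2 d2 (\<lambda>g f. word_op g (x # w) (F g f))"
      using R2 LT by (simp add: count_Cons)
    ultimately show ?thesis using c1 LT by (auto simp: count_Cons)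
  qed
qed

lemma word_op_append: "word_op g (xs @ ys) = word_op g xs \<circ> word_op g ys"
  by (induction xs) auto

lemma word_op_rep: "word_op g (replicate i LM) = Mop g ^^ i"
  by (induction i) auto

lemma Mpow_holo:
  assumes g: "g holomorphic_on ball 0 1" and h: "h holomorphic_on ball 0 1"
  shows "(Mop g ^^ i) h holomorphic_on ball 0 1"
  by (induction i) (use h Mop_holo[OF g] in auto)

lemma T_M_pow:
  assumes g: "g holomorphic_on ball 0 1" and h: "h holomorphic_on ball 0 1"
  shows "\<forall>z\<in>ball 0 1. Top g ((Mop g ^^ i) h) z = X g i 1 h z"
proof (induction i)
  case 0
  show ?case by (simp add: X_def)
next
  case (Suc i)
  show ?case
  proof
    fix z :: complex assume z: "z \<in> ball 0 1"
    have "Top g ((Mop g ^^ Suc i) h) z = Top g (Mop g ((Mop g ^^ i) h)) z" by simp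
    also have "\<dots> = Sop g (Top g ((Mop g ^^ i) h)) z" by (rule TM[OF g Mpow_holo[OF g h] z])
    also have "\<dots> = Sop g (X g i 1 h) z" by (rule Sop_cong[OF Suc z])
    also have "\<dots> = X g (Suc i) 1 h z" by (simp only: X_S)
    finally show "Top g ((Mop g ^^ Suc i) h) z = X g (Suc i) 1 h z" .
  qed
qed

lemma S_M_pow:
  assumes g: "g holomorphic_on ball 0 1" and h: "h holomorphic_on ball 0 1"
  shows "\<forall>z\<in>ball 0 1. Sop g ((Mop g ^^ i) h) z = 1 * X g (Suc i) 0 (Pi0 h) z + of_nat i * X g i 1 h z"
proof (induction i)
  case 0
  show ?case
  proof
    fix z :: complex assume z: "z \<in> ball 0 1"
    have "Sop g ((Mop g ^^ 0) h) z = Sop g (Pi0 h) z" using S_Pi0[OF h z] by simp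
    then show "Sop g ((Mop g ^^ 0) h) z = 1 * X g (Suc 0) 0 (Pi0 h) z + of_nat 0 * X g 0 1 h z"
      by (simp add: X_def)
  qed
next
  case (Suc i)
  show ?case
  proof
    fix z :: complex assume z: "z \<in> ball 0 1"
    define H where "H = (Mop g ^^ i) h"
    have Hh: "H holomorphic_on ball 0 1" unfolding H_def by (rule Mpow_holo[OF g h])
    have IH: "\<forall>z\<in>ball 0 1. Sop g H z = 1 * X g (Suc i) 0 (Pi0 h) z + of_nat i * X g i 1 h z"
      using Suc unfolding H_def .
    have TH: "\<forall>z\<in>ball 0 1. Top g H z = X g i 1 h z"
      using T_M_pow[OF g h] unfolding H_def by blast
    have "Sop g ((Mop g ^^ Suc i) h) z = Sop g (Mop g H) z" by (simp add: H_def)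
    also have "\<dots> = Sop g (Sop g H) z + Sop g (Top g H) z" by (rule SM[OF g Hh z])
    also have "Sop g (Sop g H) z = Sop g (\<lambda>z. 1 * X g (Suc i) 0 (Pi0 h) z + of_nat i * X g i 1 h z) z"
      by (rule Sop_cong[OF IH z])
    also have "\<dots> = 1 * Sop g (X g (Suc i) 0 (Pi0 h)) z + of_nat i * Sop g (X g i 1 h) z"
      by (rule Sop_add[OF g X_holo[OF g Pi0_holo[OF h]] X_holo[OF g h] z])
    also have "Sop g (Top g H) z = Sop g (X g i 1 h) z"
      by (rule Sop_cong[OF TH z])
    finally show "Sop g ((Mop g ^^ Suc i) h) z = 1 * X g (Suc (Suc i)) 0 (Pi0 h) z + of_nat (Suc i) * X g (Suc i) 1 h z"
      by (simp add: X_S algebra_simps)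
  qed
qed

lemma baseT: "Rep (Suc i) 1 (\<lambda>x. if x = 1 then 1 else 0) (\<lambda>x. 0) (\<lambda>g f. Top g ((Mop g ^^ i) f))"
  unfolding Rep_def
proof (intro conjI allI impI ballI)
  fix g f z assume g: "g holomorphic_on ball 0 1" and f: "f holomorphic_on ball 0 1" and z: "z \<in> ball (0::complex) 1"
  have "comb2 g (Suc i) (\<lambda>x. if x = 1 then 1 else 0) (\<lambda>x. 0) f z = of_int 1 * X g (Suc i - 1) 1 f z"
  proof -
    have "comb g (Suc i) (\<lambda>x. if x = 1 then 1 else 0) f z = of_int 1 * X g (Suc i - 1) 1 f z"
      by (rule comb_single') simp
    then show ?thesis unfolding comb2_def comb_zero by simp
  qed
  then show "Top g ((Mop g ^^ i) f) z = comb2 g (Suc i) (\<lambda>x. if x = 1 then 1 else 0) (\<lambda>x. 0) f z"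
    using T_M_pow[OF g f] z by simp
qed auto

lemma baseS: "Rep (Suc i) 0 (\<lambda>x. if x = 1 then int i else 0) (\<lambda>x. if x = 0 then 1 else 0) (\<lambda>g f. Sop g ((Mop g ^^ i) f))"
  unfolding Rep_def
proof (intro conjI allI impI ballI)
  fix g f z assume g: "g holomorphic_on ball 0 1" and f: "f holomorphic_on ball 0 1" and z: "z \<in> ball (0::complex) 1"
  have "comb2 g (Suc i) (\<lambda>x. if x = 1 then int i else 0) (\<lambda>x. if x = 0 then 1 else 0) f z =
      of_int (int i) * X g (Suc i - 1) 1 f z + of_int 1 * X g (Suc i - 0) 0 (Pi0 f) z"
  proof -
    have "comb g (Suc i) (\<lambda>x. if x = 1 then int i else 0) f z = of_int (int i) * X g (Suc i - 1) 1 f z"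
      by (rule comb_single') simp
    moreover have "comb g (Suc i) (\<lambda>x. if x = 0 then 1 else 0) (Pi0 f) z = of_int 1 * X g (Suc i - 0) 0 (Pi0 f) z"
      by (rule comb_single') simp
    ultimately show ?thesis unfolding comb2_def by simp
  qed
  then show "Sop g ((Mop g ^^ i) f) z = comb2 g (Suc i) (\<lambda>x. if x = 1 then int i else 0) (\<lambda>x. if x = 0 then 1 else 0) f z"
    using S_M_pow[OF g f] z by simp
qed auto

lemma decomp:
  assumes "\<exists>x\<in>set pat. x \<noteq> LM"
  shows "\<exists>w' Y i. Y \<noteq> LM \<and> pat = w' @ [Y] @ replicate i LM"
  using assms
proof (induction pat rule: rev_induct)
  case Nil then show ?case by simp
next
  case (snoc x xs)
  show ?case
  proof (cases "x = LM")
    case False then show ?thesis by (intro exI[of _ xs] exI[of _ x] exI[of _ 0]) simp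
  next
    case True
    then have "\<exists>x\<in>set xs. x \<noteq> LM" using snoc.prems by auto
    then obtain w' Y i where "Y \<noteq> LM" "xs = w' @ [Y] @ replicate i LM" using snoc.IH by blast
    then show ?thesis using True
      by (intro exI[of _ w'] exI[of _ Y] exI[of _ "Suc i"]) (simp add: replicate_append_same[symmetric])
  qed
qed

lemma dropWhile_rep: "Y \<noteq> LM \<Longrightarrow> dropWhile (\<lambda>x. x = LM) (replicate i LM @ Y # r) = Y # r"
  by (induction i) auto

lemma ends_char:
  assumes Y: "Y \<noteq> LM" and Z: "Z \<noteq> LM" and eq: "w1 @ [Y] @ replicate i LM = w2 @ [Z] @ replicate j LM"
  shows "Y = Z"
proof -
  have "rev (w1 @ [Y] @ replicate i LM) = rev (w2 @ [Z] @ replicate j LM)" using eq by simp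
  then have "replicate i LM @ Y # rev w1 = replicate j LM @ Z # rev w2" by simp
  then have "dropWhile (\<lambda>x. x = LM) (replicate i LM @ Y # rev w1) = dropWhile (\<lambda>x. x = LM) (replicate j LM @ Z # rev w2)"
    by simp
  then show ?thesis using dropWhile_rep[OF Y] dropWhile_rep[OF Z] by simp
qed

lemma ends_T: "Y \<noteq> LM \<Longrightarrow> ends_in_T (w' @ [Y] @ replicate i LM) \<longleftrightarrow> Y = LT"
  unfolding ends_in_T_def using ends_char[of Y LT] by blast

lemma ends_S: "Y \<noteq> LM \<Longrightarrow> ends_in_S (w' @ [Y] @ replicate i LM) \<longleftrightarrow> Y = LS"
  unfolding ends_in_S_def using ends_char[of Y LS] by blast

lemma count_append: "count_letter a (xs @ ys) = count_letter a xs + count_letter a ys"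
  unfolding count_letter_def by simp

lemma count_single: "count_letter a [Y] = (if Y = a then 1 else 0)"
  unfolding count_letter_def by simp

lemma count_rep: "count_letter a (replicate i LM) = (if a = LM then i else 0)"
  unfolding count_letter_def by (simp add: filter_replicate)

lemma length_count: "length w = count_letter LM w + count_letter LS w + count_letter LT w"
proof (induction w)
  case Nil then show ?case by (simp add: count_letter_def)
next
  case (Cons x w) then show ?case by (cases x) (simp_all add: count_Cons)
qed

lemma count_pos: "count_letter a w \<noteq> 0 \<Longrightarrow> a \<in> set w"
  unfolding count_letter_def by (induction w) (auto split: if_splits)

lemma comb_split:
  assumes cz: "\<forall>x<n. c x = 0"
  shows "comb g (k + n) c u z = of_int (c n) * X g k n u z +
           (\<Sum>j=1..k. of_int (c (n + j)) * X g (k - j) (n + j) u z)"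
proof -
  have "comb g (k + n) c u z = (\<Sum>b\<in>{0 + n..k + n}. of_int (c b) * X g (k + n - b) b u z)"
    unfolding comb_def
    by (rule sum.mono_neutral_cong_right) (use cz in auto)
  also have "\<dots> = (\<Sum>j\<in>{0..k}. of_int (c (j + n)) * X g (k + n - (j + n)) (j + n) u z)"
    by (rule sum.shift_bounds_cl_nat_ivl)
  also have "\<dots> = (\<Sum>j\<in>{0..k}. of_int (c (n + j)) * X g (k - j) (n + j) u z)"
    by (intro sum.cong refl) (simp add: add.commute)
  also have "\<dots> = of_int (c n) * X g k n u z + (\<Sum>j=1..k. of_int (c (n + j)) * X g (k - j) (n + j) u z)"
    by (subst sum.atLeast_Suc_atMost) simp_all
  finally show ?thesis .
qed

lemma core:
  fixes l m n k :: nat and pat :: "letter list"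
  assumes mn: "m + n \<ge> 1" and k: "k = l + m"
    and cl: "count_letter LM pat = l" and cm: "count_letter LS pat = m" and cn: "count_letter LT pat = n"
  shows "\<exists>c d. c n = (if ends_in_T pat then 1 else 0) \<and> d n = (if ends_in_S pat then 1 else 0) \<and>
    (\<forall>x<n. c x = 0 \<and> d x = 0) \<and>
    (\<forall>g f. g holomorphic_on ball 0 1 \<longrightarrow> f holomorphic_on ball 0 1 \<longrightarrow>
       (\<forall>z\<in>ball 0 1. word_op g pat f z = comb g (k + n) c f z + comb g (k + n) d (Pi0 f) z))"
proof -
  have "\<exists>x\<in>set pat. x \<noteq> LM"
  proof (cases "m = 0")
    case True
    then have "LT \<in> set pat" using mn cn count_pos[of LT pat] by auto
    then show ?thesis by force
  next
    case False
    then have "LS \<in> set pat" using cm count_pos[of LS pat] by auto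
    then show ?thesis by force
  qed
  then obtain w' Y i where Y: "Y \<noteq> LM" and pat: "pat = w' @ [Y] @ replicate i LM"
    using decomp by blast
  have wop: "word_op g pat f = word_op g w' (letter_op g Y ((Mop g ^^ i) f))" for g f
    unfolding pat by (simp add: word_op_append word_op_rep)
  have r: "count_letter LS (replicate i LM) = 0" "count_letter LT (replicate i LM) = 0"
    "count_letter LM (replicate i LM) = i"
    unfolding count_letter_def by (induction i) auto
  have l: "l = count_letter LM w' + i" using cl Y unfolding pat count_append count_single r by simp
  have m: "m = count_letter LS w' + (if Y = LS then 1 else 0)" using cm unfolding pat count_append count_single r by simp
  have n: "n = count_letter LT w' + (if Y = LT then 1 else 0)" using cn unfolding pat count_append count_single r by simp
  have len: "length w' = count_letter LM w' + count_letter LS w' + count_letter LT w'" by (rule length_count)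
  show ?thesis
  proof (cases Y)
    case LM then show ?thesis using Y by simp
  next
    case LT
    obtain c' d' where c'1: "c' (1 + count_letter LT w') = 1" and d'1: "d' (1 + count_letter LT w') = 0"
      and R: "Rep (Suc i + length w') (1 + count_letter LT w') c' d' (\<lambda>g f. word_op g w' (Top g ((Mop g ^^ i) f)))"
      using word_rep[OF baseT[of i], of w'] by auto
    have nn: "n = 1 + count_letter LT w'" using n LT by simp
    have kn: "k + n = Suc i + length w'" using k l m n len LT by simp
    have eT: "ends_in_T pat" "\<not> ends_in_S pat" using ends_T[OF Y] ends_S[OF Y] LT unfolding pat by auto
    show ?thesis
    proof (intro exI conjI)
      show "c' n = (if ends_in_T pat then 1 else 0)" "d' n = (if ends_in_S pat then 1 else 0)"
        using c'1 d'1 eT nn by auto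
      show "\<forall>x<n. c' x = 0 \<and> d' x = 0" using R nn unfolding Rep_def by auto
      show "\<forall>g f. g holomorphic_on ball 0 1 \<longrightarrow> f holomorphic_on ball 0 1 \<longrightarrow>
       (\<forall>z\<in>ball 0 1. word_op g pat f z = comb g (k + n) c' f z + comb g (k + n) d' (Pi0 f) z)"
        using R unfolding Rep_def comb2_def kn by (simp add: wop LT)
    qed
  next
    case LS
    obtain c' d' where c'1: "c' (0 + count_letter LT w') = 0" and d'1: "d' (0 + count_letter LT w') = 1"
      and R: "Rep (Suc i + length w') (0 + count_letter LT w') c' d' (\<lambda>g f. word_op g w' (Sop g ((Mop g ^^ i) f)))"
      using word_rep[OF baseS[of i], of w'] by auto
    have nn: "n = 0 + count_letter LT w'" using n LS by simp
    have kn: "k + n = Suc i + length w'" using k l m n len LS by simp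
    have eS: "\<not> ends_in_T pat" "ends_in_S pat" using ends_T[OF Y] ends_S[OF Y] LS unfolding pat by auto
    show ?thesis
    proof (intro exI conjI)
      show "c' n = (if ends_in_T pat then 1 else 0)" "d' n = (if ends_in_S pat then 1 else 0)"
        using c'1 d'1 eS nn by auto
      show "\<forall>x<n. c' x = 0 \<and> d' x = 0" using R nn unfolding Rep_def by auto
      show "\<forall>g f. g holomorphic_on ball 0 1 \<longrightarrow> f holomorphic_on ball 0 1 \<longrightarrow>
       (\<forall>z\<in>ball 0 1. word_op g pat f z = comb g (k + n) c' f z + comb g (k + n) d' (Pi0 f) z)"
        using R unfolding Rep_def comb2_def kn by (simp add: wop LS)
    qed
  qed
qed

theorem theorem3p1:
  fixes l m n k :: nat and pat :: "letter list"
  assumes "m + n \<ge> 1" and "k = l + m" and "k \<ge> 1"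
    and "count_letter LM pat = l" and "count_letter LS pat = m" and "count_letter LT pat = n"
  shows "\<exists>(a :: nat \<Rightarrow> int) (b :: nat \<Rightarrow> int).
           \<forall>g. g holomorphic_on ball 0 1 \<longrightarrow>
             (\<forall>f. f holomorphic_on ball 0 1 \<longrightarrow>
               (\<forall>z\<in>ball 0 1.
                 word_op g pat f z =
                   (if ends_in_T pat then 1 else 0) * ((Sop g ^^ k) ((Top g ^^ n) f)) z
                   + (if ends_in_S pat then 1 else 0) * ((Sop g ^^ k) ((Top g ^^ n) (Pi0 f))) z
                   + (\<Sum>j=1..k. of_int (a j) * ((Sop g ^^ (k - j)) ((Top g ^^ (n + j)) f)) z)
                   + (\<Sum>j=1..k. of_int (b j) * ((Sop g ^^ (k - j)) ((Top g ^^ (n + j)) (Pi0 f))) z))) \<and>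
         (\<exists>(c :: nat \<Rightarrow> int).
           \<forall>g. g holomorphic_on ball 0 1 \<longrightarrow>
             (\<forall>f. f holomorphic_on ball 0 1 \<longrightarrow> f 0 = 0 \<longrightarrow>
               (\<forall>z\<in>ball 0 1.
                 word_op g pat f z =
                   ((Sop g ^^ k) ((Top g ^^ n) f)) z
                   + (\<Sum>j=1..k. of_int (c j) * ((Sop g ^^ (k - j)) ((Top g ^^ (n + j)) f)) z))))"
proof -
  obtain c d where cn: "c n = (if ends_in_T pat then 1 else 0)" and dn: "d n = (if ends_in_S pat then 1 else 0)"
    and cz: "\<forall>x<n. c x = 0 \<and> d x = 0"
    and W: "\<forall>g f. g holomorphic_on ball 0 1 \<longrightarrow> f holomorphic_on ball 0 1 \<longrightarrow>
       (\<forall>z\<in>ball 0 1. word_op g pat f z = comb g (k + n) c f z + comb g (k + n) d (Pi0 f) z)"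
    using core[OF assms(1,2,4,5,6)] by blast
  have czc: "\<forall>x<n. c x = 0" and czd: "\<forall>x<n. d x = 0" using cz by auto
  have one: "c n + d n = 1"
  proof -
    have "\<exists>x\<in>set pat. x \<noteq> LM"
    proof (cases "m = 0")
      case True
      then have "LT \<in> set pat" using assms(1,6) count_pos[of LT pat] by auto
      then show ?thesis by force
    next
      case False
      then have "LS \<in> set pat" using assms(5) count_pos[of LS pat] by auto
      then show ?thesis by force
    qed
    then obtain w' Y i where Y: "Y \<noteq> LM" and pat: "pat = w' @ [Y] @ replicate i LM"
      using decomp by blast
    show ?thesis using ends_T[OF Y] ends_S[OF Y] Y cn dn unfolding pat by (cases Y) auto
  qed
  define a where "a j = c (n + j)" for j
  define b where "b j = d (n + j)" for j
  have part1: "\<forall>g. g holomorphic_on ball 0 1 \<longrightarrow>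
             (\<forall>f. f holomorphic_on ball 0 1 \<longrightarrow>
               (\<forall>z\<in>ball 0 1.
                 word_op g pat f z =
                   (if ends_in_T pat then 1 else 0) * ((Sop g ^^ k) ((Top g ^^ n) f)) z
                   + (if ends_in_S pat then 1 else 0) * ((Sop g ^^ k) ((Top g ^^ n) (Pi0 f))) z
                   + (\<Sum>j=1..k. of_int (a j) * ((Sop g ^^ (k - j)) ((Top g ^^ (n + j)) f)) z)
                   + (\<Sum>j=1..k. of_int (b j) * ((Sop g ^^ (k - j)) ((Top g ^^ (n + j)) (Pi0 f))) z)))"
  proof (intro allI impI ballI)
    fix g f z assume g: "g holomorphic_on ball 0 1" and f: "f holomorphic_on ball 0 1" and z: "z \<in> ball (0::complex) 1"
    have "word_op g pat f z = comb g (k + n) c f z + comb g (k + n) d (Pi0 f) z" using W g f z by blast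
    also have "\<dots> = (of_int (c n) * X g k n f z + (\<Sum>j=1..k. of_int (c (n + j)) * X g (k - j) (n + j) f z))
        + (of_int (d n) * X g k n (Pi0 f) z + (\<Sum>j=1..k. of_int (d (n + j)) * X g (k - j) (n + j) (Pi0 f) z))"
      by (simp only: comb_split[OF czc] comb_split[OF czd])
    finally show "word_op g pat f z =
                   (if ends_in_T pat then 1 else 0) * ((Sop g ^^ k) ((Top g ^^ n) f)) z
                   + (if ends_in_S pat then 1 else 0) * ((Sop g ^^ k) ((Top g ^^ n) (Pi0 f))) z
                   + (\<Sum>j=1..k. of_int (a j) * ((Sop g ^^ (k - j)) ((Top g ^^ (n + j)) f)) z)
                   + (\<Sum>j=1..k. of_int (b j) * ((Sop g ^^ (k - j)) ((Top g ^^ (n + j)) (Pi0 f))) z)"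
      unfolding cn dn a_def b_def X_def by (simp add: algebra_simps)
  qed
  define cc where "cc j = c (n + j) + d (n + j)" for j
  have part2: "\<forall>g. g holomorphic_on ball 0 1 \<longrightarrow>
             (\<forall>f. f holomorphic_on ball 0 1 \<longrightarrow> f 0 = 0 \<longrightarrow>
               (\<forall>z\<in>ball 0 1.
                 word_op g pat f z =
                   ((Sop g ^^ k) ((Top g ^^ n) f)) z
                   + (\<Sum>j=1..k. of_int (cc j) * ((Sop g ^^ (k - j)) ((Top g ^^ (n + j)) f)) z)))"
  proof (intro allI impI ballI)
    fix g f z assume g: "g holomorphic_on ball 0 1" and f: "f holomorphic_on ball 0 1" and f0: "f 0 = 0"
      and z: "z \<in> ball (0::complex) 1"
    have Pf: "Pi0 f = f" unfolding Pi0_def f0 by simp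
    have "word_op g pat f z = comb g (k + n) c f z + comb g (k + n) d f z" using W g f z Pf by metis
    also have "\<dots> = comb g (k + n) (\<lambda>x. c x + d x) f z" by (simp only: comb_add)
    also have "\<dots> = of_int (c n + d n) * X g k n f z + (\<Sum>j=1..k. of_int (c (n + j) + d (n + j)) * X g (k - j) (n + j) f z)"
      by (rule comb_split) (use cz in auto)
    finally show "word_op g pat f z =
                   ((Sop g ^^ k) ((Top g ^^ n) f)) z
                   + (\<Sum>j=1..k. of_int (cc j) * ((Sop g ^^ (k - j)) ((Top g ^^ (n + j)) f)) z)"
      unfolding one cc_def X_def by simp
  qed
  show ?thesis using part1 part2 by blast
qed

end
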